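(* Let $N\ge 1$ and let $\Sigma_N^{+}$ be the space of sequences $(x_n)_{n\in\mathbb{N}}$ with $x_n\in\{1,\dots,N\}$, with metric $d(x,y)=2^{-\min\{i:x_i\neq y_i\}}$. For $1\le i\le N$ let $W_i=\{x\in\Sigma_N^+: x_1=i\}$. Let $T:\Sigma_N^+\to\Sigma_N^+$ be a continuous surjection such that for every $1\le i\le N$ there exists $x^i\in W_i$ with $T(x^i)\in W_i$. Then there exists a continuous surjection $\widetilde T:\Sigma_N^+\to\Sigma_N^+$ such that for every $x\in\Sigma_N^+$ and every $i$, $\widetilde T(x)\in W_i$ if and only if $T(x)\in W_i$, and the orbit of every point under $\widetilde T$ is finally periodic.
   Context: The orbit of $x$ under a map $S$ is finally periodic if there exist integers $j,M>0$ with $S^{M+j}(x)=S^{j}(x)$. *)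

theory Defs
  imports Complex_Main
begin

text \<open>One-sided full shift on N symbols. Coordinates are indexed from 0:
  position n of the Isabelle sequence is the paper's coordinate x_(n+1).\<close>

definition sigma :: "nat \<Rightarrow> (nat \<Rightarrow> nat) set" where
  "sigma N = {x. \<forall>n. x n \<in> {1..N}}"

text \<open>d(x,y) = 2^(-min{i : x_i ~= y_i}) with paper indices starting at 1.\<close>
definition shift_dist :: "(nat \<Rightarrow> nat) \<Rightarrow> (nat \<Rightarrow> nat) \<Rightarrow> real" where
  "shift_dist x y = (if x = y then 0 else (1/2) ^ Suc (LEAST i. x i \<noteq> y i))"

definition cyl :: "nat \<Rightarrow> nat \<Rightarrow> (nat \<Rightarrow> nat) set" where
  "cyl N i = {x \<in> sigma N. x 0 = i}"

definition shift_continuous :: "nat \<Rightarrow> ((nat \<Rightarrow> nat) \<Rightarrow> (nat \<Rightarrow> nat)) \<Rightarrow> bool" where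
  "shift_continuous N T = (\<forall>x\<in>sigma N. \<forall>e>0. \<exists>\<delta>>0. \<forall>y\<in>sigma N.
      shift_dist x y < \<delta> \<longrightarrow> shift_dist (T x) (T y) < e)"

definition finally_periodic :: "('a \<Rightarrow> 'a) \<Rightarrow> 'a \<Rightarrow> bool" where
  "finally_periodic S x = (\<exists>j M. j > 0 \<and> M > 0 \<and> (S ^^ (M + j)) x = (S ^^ j) x)"

end

theory Submission
  imports Defs
begin

lemma dist_lt: "shift_dist x y < (1/2)^n \<longleftrightarrow> (\<forall>k<n. x k = y k)"
proof (cases "x = y")
  case True then show ?thesis by (simp add: shift_dist_def)
next
  case False
  then obtain i where i: "x i \<noteq> y i" by auto
  define L where "L = (LEAST i. x i \<noteq> y i)"
  have L1: "x L \<noteq> y L" unfolding L_def by (rule LeastI[of _ i], rule i)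
  have L2: "\<And>k. k < L \<Longrightarrow> x k = y k" unfolding L_def using not_less_Least by blast
  have "shift_dist x y = (1/2)^Suc L" using False by (simp add: shift_dist_def L_def)
  moreover have "((1/2::real)^Suc L < (1/2)^n) \<longleftrightarrow> n < Suc L"
    by (intro power_strict_decreasing_iff) auto
  moreover have "n < Suc L \<longleftrightarrow> (\<forall>k<n. x k = y k)"
  proof
    assume "n < Suc L" then show "\<forall>k<n. x k = y k" using L2 by auto
  next
    assume a: "\<forall>k<n. x k = y k"
    show "n < Suc L"
    proof (rule ccontr)
      assume "\<not> n < Suc L" then have "L < n" by simp
      then show False using a L1 by blast
    qed
  qed
  ultimately show ?thesis by (metis (no_types))
qed

lemma cont_agree:
  assumes "shift_continuous N T" "x \<in> sigma N"
  shows "\<exists>n. \<forall>y\<in>sigma N. (\<forall>k<n. x k = y k) \<longrightarrow> (\<forall>k<m. T x k = T y k)"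
proof -
  have "(0::real) < (1/2)^m" by simp
  then obtain d where d: "d > 0" "\<forall>y\<in>sigma N. shift_dist x y < d \<longrightarrow> shift_dist (T x) (T y) < (1/2)^m"
    using assms unfolding shift_continuous_def by blast
  obtain n where n: "(1/2::real)^n < d" using real_arch_pow_inv[OF d(1), of "1/2"] by auto
  show ?thesis
  proof (intro exI ballI impI)
    fix y assume "y \<in> sigma N" "\<forall>k<n. x k = y k"
    then have "shift_dist x y < d" using n dist_lt by (metis less_trans)
    then have "shift_dist (T x) (T y) < (1/2)^m" using d `y \<in> sigma N` by blast
    then show "\<forall>k<m. T x k = T y k" using dist_lt by blast
  qed
qed

lemma agree_cont:
  assumes "\<forall>x\<in>sigma N. \<forall>m. \<exists>n. \<forall>y\<in>sigma N. (\<forall>k<n. x k = y k) \<longrightarrow> (\<forall>k<m. T x k = T y k)"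
  shows "shift_continuous N T"
  unfolding shift_continuous_def
proof (intro ballI allI impI)
  fix x e assume x: "x \<in> sigma N" and e: "(e::real) > 0"
  obtain m where m: "(1/2::real)^m < e" using real_arch_pow_inv[OF e, of "1/2"] by auto
  obtain n where n: "\<forall>y\<in>sigma N. (\<forall>k<n. x k = y k) \<longrightarrow> (\<forall>k<m. T x k = T y k)"
    using assms x by blast
  show "\<exists>\<delta>>0. \<forall>y\<in>sigma N. shift_dist x y < \<delta> \<longrightarrow> shift_dist (T x) (T y) < e"
  proof (intro exI[of _ "(1/2)^n"] conjI ballI impI)
    show "(0::real) < (1/2)^n" by simp
    fix y assume "y \<in> sigma N" "shift_dist x y < (1/2)^n"
    then have "\<forall>k<m. T x k = T y k" using n dist_lt by blast
    then have "shift_dist (T x) (T y) < (1/2)^m" using dist_lt by blast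
    then show "shift_dist (T x) (T y) < e" using m by linarith
  qed
qed

definition inU :: "(nat \<Rightarrow> nat \<Rightarrow> nat) \<Rightarrow> nat \<Rightarrow> (nat\<Rightarrow>nat) \<Rightarrow> bool" where
  "inU z K x = (\<forall>n\<le>K. x n = z (x 0) n)"
definition pp :: "(nat \<Rightarrow> nat \<Rightarrow> nat) \<Rightarrow> nat \<Rightarrow> nat \<Rightarrow> (nat\<Rightarrow>nat)" where
  "pp z K i = (\<lambda>n. if n=0 then i else z i ((n-1) mod K + 1))"
definition TT :: "((nat \<Rightarrow> nat) \<Rightarrow> (nat \<Rightarrow> nat)) \<Rightarrow> (nat \<Rightarrow> nat \<Rightarrow> nat) \<Rightarrow> nat \<Rightarrow> (nat\<Rightarrow>nat) \<Rightarrow> (nat\<Rightarrow>nat)" where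
  "TT T z K x = (if inU z K x then (\<lambda>n. if n=0 then x 0 else x (n+K)) else pp z K (T x 0))"

theorem lemma3p1:
  fixes N :: nat and T :: "(nat \<Rightarrow> nat) \<Rightarrow> (nat \<Rightarrow> nat)"
  assumes "N \<ge> 1"
    and "T ` sigma N = sigma N"
    and "shift_continuous N T"
    and "\<forall>i\<in>{1..N}. \<exists>x\<in>cyl N i. T x \<in> cyl N i"
  shows "\<exists>T'. T' ` sigma N = sigma N \<and> shift_continuous N T'
    \<and> (\<forall>x\<in>sigma N. \<forall>i. T' x \<in> cyl N i \<longleftrightarrow> T x \<in> cyl N i)
    \<and> (\<forall>x\<in>sigma N. finally_periodic T' x)"
proof -
  have Ts: "\<And>x. x \<in> sigma N \<Longrightarrow> T x \<in> sigma N" using assms(2) by blast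
  obtain z where z: "\<forall>i\<in>{1..N}. z i \<in> cyl N i \<and> T (z i) \<in> cyl N i"
  proof -
    have "\<forall>i\<in>{1..N}. \<exists>x. x \<in> cyl N i \<and> T x \<in> cyl N i" using assms(4) by blast
    from bchoice[OF this] show ?thesis using that by blast
  qed
  have zs: "\<And>i. i\<in>{1..N} \<Longrightarrow> z i \<in> sigma N \<and> z i 0 = i \<and> T (z i) 0 = i"
    using z unfolding cyl_def by blast
  have "\<forall>i\<in>{1..N}. \<exists>n. \<forall>y\<in>sigma N. (\<forall>k<n. z i k = y k) \<longrightarrow> (\<forall>k<1. T (z i) k = T y k)"
    using cont_agree[OF assms(3)] zs by blast
  then obtain kk where kk: "\<forall>i\<in>{1..N}. \<forall>y\<in>sigma N. (\<forall>k<kk i. z i k = y k) \<longrightarrow> (\<forall>k<1. T (z i) k = T y k)"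
    by (rule bchoice[THEN exE]) blast
  define K where "K = Suc (\<Sum>i\<in>{1..N}. kk i)"
  have K1: "K \<ge> 1" unfolding K_def by simp
  have Uf: "T y 0 = i" if "i\<in>{1..N}" "y\<in>sigma N" "\<forall>n\<le>K. y n = z i n" for i y
  proof -
    have "kk i \<le> (\<Sum>i\<in>{1..N}. kk i)" using that(1) by (intro member_le_sum) auto
    then have "\<forall>k<kk i. z i k = y k" using that(3) unfolding K_def by auto
    then show ?thesis using kk that zs by fastforce
  qed
  define T' where "T' = TT T z K"
  have sg: "\<And>x n. x \<in> sigma N \<Longrightarrow> x n \<in> {1..N}" unfolding sigma_def by blast
  have sig: "T' x \<in> sigma N" if x: "x \<in> sigma N" for x
  proof (cases "inU z K x")
    case True then show ?thesis using x unfolding T'_def TT_def sigma_def by auto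
  next
    case False
    have i: "T x 0 \<in> {1..N}" using Ts[OF x] sg by blast
    have "z (T x 0) \<in> sigma N" using zs[OF i] by blast
    then show ?thesis using False i unfolding T'_def TT_def pp_def sigma_def by auto
  qed
  have first: "T' x 0 = T x 0" if x: "x \<in> sigma N" for x
  proof (cases "inU z K x")
    case True
    have "T x 0 = x 0" using Uf[OF sg[OF x] x] True unfolding inU_def by blast
    then show ?thesis using True unfolding T'_def TT_def by simp
  next
    case False then show ?thesis unfolding T'_def TT_def pp_def by simp
  qed
  have pin: "inU z K (pp z K i)" if i: "i \<in> {1..N}" for i
    unfolding inU_def pp_def using zs[OF i] K1 by auto
  have pfix: "T' (pp z K i) = pp z K i" if i: "i \<in> {1..N}" for i
  proof
    fix n
    show "T' (pp z K i) n = pp z K i n"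
    proof (cases n)
      case 0 then show ?thesis using pin[OF i] unfolding T'_def TT_def pp_def by simp
    next
      case (Suc m)
      have "(m + K) mod K = m mod K" by simp
      then show ?thesis using pin[OF i] Suc K1 unfolding T'_def TT_def pp_def by simp
    qed
  qed
  have surj: "T' ` sigma N = sigma N"
  proof
    show "T' ` sigma N \<subseteq> sigma N" using sig by blast
    show "sigma N \<subseteq> T' ` sigma N"
    proof
      fix y assume y: "y \<in> sigma N"
      define i where "i = y 0"
      have i: "i \<in> {1..N}" using sg[OF y] i_def by blast
      define x where "x = (\<lambda>n. if n \<le> K then z i n else y (n - K))"
      have xs: "x \<in> sigma N" using zs[OF i] y sg unfolding x_def sigma_def by auto
      have x0: "x 0 = i" using zs[OF i] unfolding x_def by simp
      have xu: "inU z K x" using x0 unfolding inU_def x_def by simp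
      have "T' x = y"
      proof
        fix n show "T' x n = y n"
          using xu x0 K1 unfolding T'_def TT_def x_def i_def by auto
      qed
      then show "y \<in> T' ` sigma N" using xs by blast
    qed
  qed
  have cont: "shift_continuous N T'"
  proof (rule agree_cont, intro ballI allI)
    fix x m assume x: "x \<in> sigma N"
    obtain nf where nf: "\<forall>y\<in>sigma N. (\<forall>k<nf. x k = y k) \<longrightarrow> (\<forall>k<1. T x k = T y k)"
      using cont_agree[OF assms(3) x] by blast
    show "\<exists>n. \<forall>y\<in>sigma N. (\<forall>k<n. x k = y k) \<longrightarrow> (\<forall>k<m. T' x k = T' y k)"
    proof (intro exI[of _ "m + K + 1 + nf"] ballI impI)
      fix y assume y: "y \<in> sigma N" and ag: "\<forall>k<m + K + 1 + nf. x k = y k"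
      have f: "T x 0 = T y 0" using nf y ag by auto
      have agK: "\<forall>k\<le>K. x k = y k" using ag by auto
      have iff: "inU z K x \<longleftrightarrow> inU z K y" using agK unfolding inU_def by auto
      show "\<forall>k<m. T' x k = T' y k"
      proof (cases "inU z K x")
        case True
        then show ?thesis using iff ag unfolding T'_def TT_def by auto
      next
        case False
        then show ?thesis using iff f unfolding T'_def TT_def by auto
      qed
    qed
  qed
  have sigit: "(T' ^^ k) x \<in> sigma N" if "x \<in> sigma N" for k x
    using that by (induction k) (auto simp: sig)
  have per: "finally_periodic T' x" if x: "x \<in> sigma N" for x
  proof (cases "\<exists>k. \<not> inU z K ((T' ^^ k) x)")
    case True
    then obtain k where k: "\<not> inU z K ((T' ^^ k) x)" by blast
    define w where "w = (T' ^^ k) x"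
    have w: "w \<in> sigma N" using sigit[OF x] w_def by blast
    have i: "T w 0 \<in> {1..N}" using Ts[OF w] sg by blast
    have "T' w = pp z K (T w 0)" using k unfolding w_def T'_def TT_def by simp
    then have "T' (T' w) = T' w" using pfix[OF i] by simp
    then have "(T' ^^ (Suc (Suc k))) x = (T' ^^ Suc k) x" unfolding w_def by simp
    then show ?thesis unfolding finally_periodic_def
      by (intro exI[of _ "Suc k"] exI[of _ 1]) simp
  next
    case False
    then have allU: "\<And>k. inU z K ((T' ^^ k) x)" by blast
    have form: "(T' ^^ k) x = (\<lambda>n. if n = 0 then x 0 else x (n + k * K))" for k
    proof (induction k)
      case 0 then show ?case by auto
    next
      case (Suc k)
      define y where "y = (\<lambda>n. if n = 0 then x 0 else x (n + k * K))"
      have U: "inU z K y" using allU[of k] Suc.IH unfolding y_def by simp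
      have A: "T' y = (\<lambda>n. if n=0 then y 0 else y (n+K))"
        using U unfolding T'_def TT_def by simp
      have "T' y = (\<lambda>n. if n = 0 then x 0 else x (n + Suc k * K))"
      proof (rule ext)
        fix n
        show "T' y n = (if n = 0 then x 0 else x (n + Suc k * K))"
        proof (cases "n = 0")
          case True then show ?thesis unfolding True A unfolding y_def by (simp only: simp_thms(6) if_True)
        next
          case False
          have e: "n + K + k * K = n + Suc k * K" by simp
          have "T' y n = x (n + K + k * K)" unfolding A unfolding y_def using False by simp
          then show ?thesis using False e by simp
        qed
      qed
      then show ?case using Suc.IH unfolding y_def by simp
    qed
    have i: "x 0 \<in> {1..N}" using sg[OF x] by blast
    have xp: "x = pp z K (x 0)"
    proof
      fix n show "x n = pp z K (x 0) n"
      proof (cases n)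
        case 0 then show ?thesis unfolding pp_def by simp
      next
        case (Suc m)
        define q where "q = m div K"
        define r where "r = m mod K"
        have r: "r < K" using K1 unfolding r_def by simp
        have m: "m = r + q * K" unfolding q_def r_def by simp
        have "inU z K ((T' ^^ q) x)" by (rule allU)
        then have "\<forall>n\<le>K. ((T' ^^ q) x) n = z (((T' ^^ q) x) 0) n" unfolding inU_def .
        then have "((T' ^^ q) x) (Suc r) = z (((T' ^^ q) x) 0) (Suc r)"
          using r Suc_leI by blast
        then have "x (Suc r + q * K) = z (x 0) (Suc r)" by (simp add: form)
        moreover have "x n = x (Suc r + q * K)" using Suc m by simp
        moreover have rm: "m mod K = r" unfolding r_def by simp
        moreover have "pp z K (x 0) n = z (x 0) (Suc r)" using Suc rm unfolding pp_def by simp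
        ultimately show ?thesis by simp
      qed
    qed
    have "T' x = x" using pfix[OF i] xp by metis
    then have "(T' ^^ (Suc 1)) x = (T' ^^ 1) x" by simp
    then show ?thesis unfolding finally_periodic_def
      by (intro exI[of _ "1"] exI[of _ 1]) simp
  qed
  have cy: "T' x \<in> cyl N i \<longleftrightarrow> T x \<in> cyl N i" if x: "x \<in> sigma N" for x i
    using sig[OF x] Ts[OF x] first[OF x] unfolding cyl_def by auto
  show ?thesis using surj cont cy per by blast
qed

end
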